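(* Let $a_0,a_1,\ldots$ be a sequence of integers satisfying a linear recurrence $a_{n+k}=c_{k-1}a_{n+k-1}+\cdots+c_0a_n$ for all sufficiently large $n$, with characteristic polynomial $\chi(x)=x^k-c_{k-1}x^{k-1}-\cdots-c_0$ whose complex roots $r_1,\ldots,r_k$ are pairwise distinct, and let $\beta_1,\ldots,\beta_k\in\mathbb{C}$ be such that $a_n=\sum_{i=1}^k\beta_i r_i^n$ for all sufficiently large $n$. Suppose $\chi(x)=\chi_1(x)\chi_2(x)\cdots\chi_j(x)$ where each $\chi_i(x)$ is a polynomial irreducible over $\mathbb{Q}$. If $r_{i_1},\ldots,r_{i_d}$ are the roots of $\chi_1(x)$, then either $\beta_{i_1}=\cdots=\beta_{i_d}=0$, or all of $\beta_{i_1},\ldots,\beta_{i_d}$ are nonzero.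
   Context: It is a standard fact that when the roots of $\chi$ are distinct, such coefficients $\beta_1,\dots,\beta_k$ exist. *)

theory Defs
  imports Complex_Main "HOL-Computational_Algebra.Computational_Algebra"
begin

definition char_poly :: "nat \<Rightarrow> (nat \<Rightarrow> rat) \<Rightarrow> rat poly" where
  "char_poly k c = monom 1 k - (\<Sum>i<k. monom (c i) i)"

end

theory Submission imports Defs "HOL-Computational_Algebra.Computational_Algebra" "HOL-Computational_Algebra.Field_as_Ring" "Subresultants.More_Homomorphisms" begin

definition DD :: "complex poly \<Rightarrow> nat \<Rightarrow> complex \<Rightarrow> complex \<Rightarrow> complex" where
  "DD X M z w = (\<Sum>t\<le>M. coeff X t * (\<Sum>i<t. w ^ (t - Suc i) * z ^ i))"

lemma poly_sum_M: fixes X :: "complex poly" assumes "degree X \<le> M" shows "poly X z = (\<Sum>t\<le>M. coeff X t * z ^ t)"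
proof -
  have "poly X z = poly (\<Sum>t\<le>M. monom (coeff X t) t) z" using poly_as_sum_of_monoms'[OF assms] by simp
  also have "\<dots> = (\<Sum>t\<le>M. coeff X t * z ^ t)" unfolding poly_sum by (rule sum.cong, simp, rule Polynomial.poly_monom)
  finally show ?thesis .
qed

lemma DD_diff: assumes "degree X \<le> M"
  shows "(z - w) * DD X M z w = poly X z - poly X w"
proof -
  have "(z - w) * DD X M z w = (\<Sum>t\<le>M. coeff X t * ((z - w) * (\<Sum>i<t. w ^ (t - Suc i) * z ^ i)))"
    unfolding DD_def by (simp add: sum_distrib_left algebra_simps)
  also have "\<dots> = (\<Sum>t\<le>M. coeff X t * (z ^ t - w ^ t))" by (simp add: power_diff_sumr2)
  also have "\<dots> = poly X z - poly X w" using poly_sum_M[OF assms]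
    by (simp add: algebra_simps sum_subtractf)
  finally show ?thesis .
qed

lemma pderiv_sum': "pderiv (sum f A) = (\<Sum>x\<in>A. pderiv (f x))"
  by (induction A rule: infinite_finite_induct) (simp_all add: pderiv_add)

lemma DD_same: fixes X :: "complex poly" assumes "degree X \<le> M"
  shows "DD X M z z = poly (pderiv X) z"
proof -
  have "pderiv X = pderiv (\<Sum>t\<le>M. monom (coeff X t) t)"
    using poly_as_sum_of_monoms'[OF assms] by simp
  also have "\<dots> = (\<Sum>t\<le>M. pderiv (monom (coeff X t) t))" by (rule pderiv_sum')
  also have "\<dots> = (\<Sum>t\<le>M. monom (of_nat t * coeff X t) (t - 1))" by (simp add: pderiv_monom)
  finally have "pderiv X = (\<Sum>t\<le>M. monom (of_nat t * coeff X t) (t - 1))" .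
  hence "poly (pderiv X) z = (\<Sum>t\<le>M. of_nat t * coeff X t * z ^ (t - 1))"
    by (simp add: Polynomial.poly_sum Polynomial.poly_monom)
  also have "\<dots> = DD X M z z" unfolding DD_def
  proof (rule sum.cong)
    fix t assume "t \<in> {..M}"
    have "(\<Sum>i<t. z ^ (t - Suc i) * z ^ i) = (\<Sum>i<t. z ^ (t - 1))"
      by (rule sum.cong) (auto simp: power_add[symmetric])
    thus "of_nat t * coeff X t * z ^ (t - 1) = coeff X t * (\<Sum>i<t. z ^ (t - Suc i) * z ^ i)" by simp
  qed simp
  finally show ?thesis by simp
qed

interpretation rc: map_poly_idom_hom "of_rat :: rat \<Rightarrow> complex" ..

lemma char_poly_degree: assumes "k > 0" shows "degree (char_poly k c) = k"
proof -
  have "degree (\<Sum>i<k. monom (c i) i) \<le> k - 1"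
    by (rule degree_sum_le) (auto simp: degree_monom_le intro: order.trans[OF degree_monom_le])
  hence lt: "degree (- (\<Sum>i<k. monom (c i) i)) < degree (monom (1::rat) k)"
    using assms by (simp add: degree_monom_eq)
  have "char_poly k c = monom 1 k + (- (\<Sum>i<k. monom (c i) i))"
    by (simp add: char_poly_def)
  also have "degree \<dots> = k" using degree_add_eq_left[OF lt] by (simp add: degree_monom_eq)
  finally show ?thesis .
qed

lemma simple_roots:
  fixes X :: "complex poly"
  assumes X0: "X \<noteq> 0" and card: "card {z. poly X z = 0} = degree X"
    and z: "poly X z = 0"
  shows "poly (pderiv X) z \<noteq> 0"
proof
  assume d: "poly (pderiv X) z = 0"
  from z obtain q1 where q1: "X = [:-z,1:] * q1" by (auto simp: poly_eq_0_iff_dvd elim: dvdE)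
  have "pderiv X = q1 + [:-z,1:] * pderiv q1" unfolding q1 pderiv_mult
    by (simp add: pderiv_pCons algebra_simps)
  hence "poly q1 z = 0" using d by simp
  then obtain q where q: "q1 = [:-z,1:] * q" by (auto simp: poly_eq_0_iff_dvd elim: dvdE)
  have q0: "q \<noteq> 0" using X0 q1 q by auto
  have l1: "[:-z,1:] \<noteq> 0" by simp
  have d1: "degree [:-z,1:] = 1" by simp
  have q0': "[:-z,1:] * q \<noteq> 0" using l1 q0 mult_eq_0_iff by blast
  have dq: "degree ([:-z,1:] * q) = Suc (degree q)" unfolding degree_mult_eq[OF l1 q0] d1 by simp
  have degX: "degree X = degree q + 2" unfolding q1 q degree_mult_eq[OF l1 q0'] d1 dq by simp
  have "{z. poly X z = 0} \<subseteq> insert z {z. poly q z = 0}" unfolding q1 q by auto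
  hence "card {z. poly X z = 0} \<le> card (insert z {z. poly q z = 0})"
    by (intro card_mono) (simp_all add: poly_roots_finite[OF q0])
  also have "\<dots> \<le> Suc (card {z. poly q z = 0})" by (rule card_insert_le_m1) auto
  also have "\<dots> \<le> Suc (degree q)" using card_poly_roots_bound[OF q0] by simp
  finally show False using card degX by simp
qed

theorem mainTheorem3:
  fixes a :: "nat \<Rightarrow> int" and k :: nat and c :: "nat \<Rightarrow> rat"
    and r :: "nat \<Rightarrow> complex" and \<beta> :: "nat \<Rightarrow> complex"
    and j :: nat and \<chi>s :: "nat \<Rightarrow> rat poly"
  assumes rec: "\<exists>N. \<forall>n\<ge>N. of_int (a (n + k)) = (\<Sum>i<k. c i * of_int (a (n + i)))"
    and roots: "{z. poly (map_poly of_rat (char_poly k c)) z = 0} = r ` {..<k}"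
    and distinct: "inj_on r {..<k}"
    and closed_form: "\<exists>N. \<forall>n\<ge>N. of_int (a n) = (\<Sum>i<k. \<beta> i * r i ^ n)"
    and j_pos: "j \<ge> 1"
    and factor: "char_poly k c = (\<Prod>i<j. \<chi>s i)"
    and irred: "\<forall>i<j. irreducible (\<chi>s i)"
  shows "(\<forall>i<k. poly (map_poly of_rat (\<chi>s 0)) (r i) = 0 \<longrightarrow> \<beta> i = 0)
       \<or> (\<forall>i<k. poly (map_poly of_rat (\<chi>s 0)) (r i) = 0 \<longrightarrow> \<beta> i \<noteq> 0)"
proof (rule ccontr)
  define p where "p = \<chi>s 0"
  define pc where "pc = map_poly (of_rat :: rat \<Rightarrow> complex) p"
  define \<chi> where "\<chi> = char_poly k c"
  define X where "X = map_poly (of_rat :: rat \<Rightarrow> complex) \<chi>"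
  assume "\<not> ?thesis"
  then obtain i l where i: "i < k" "poly pc (r i) = 0" "\<beta> i \<noteq> 0"
    and l: "l < k" "poly pc (r l) = 0" "\<beta> l = 0"
    unfolding pc_def p_def by blast
  have k0: "k > 0" using i by simp
  have degX: "degree X = k" unfolding X_def \<chi>_def
    using char_poly_degree[OF k0] by (simp add: of_rat_hom.degree_map_poly_hom)
  have X0: "X \<noteq> 0" using degX k0 by auto
  have rootsX: "{z. poly X z = 0} = r ` {..<k}" using roots unfolding X_def \<chi>_def .
  have cardX: "card {z. poly X z = 0} = degree X"
    unfolding rootsX degX using distinct by (simp add: card_image)
  have simple: "poly (pderiv X) z \<noteq> 0" if "poly X z = 0" for z
    using simple_roots[OF X0 cardX that] .
  obtain N where N: "\<forall>n\<ge>N. of_int (a n) = (\<Sum>i<k. \<beta> i * r i ^ n)"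
    using closed_form by blast
  define P :: "rat poly" where
    "P = (\<Sum>t\<le>k. \<Sum>m<t. monom (coeff \<chi> t * of_int (a (N + (t - Suc m)))) m)"
  have evalP: "poly (map_poly of_rat P) z = (\<Sum>jj<k. \<beta> jj * r jj ^ N * DD X k z (r jj))" for z
  proof -
    have "poly (map_poly of_rat P) z =
      (\<Sum>t\<le>k. \<Sum>m<t. coeff X t * of_int (a (N + (t - Suc m))) * z ^ m)"
      unfolding P_def X_def
      by (simp add: rc.hom_sum of_rat_hom.map_poly_hom_monom Polynomial.poly_sum
          Polynomial.poly_monom of_rat_mult)
    also have "\<dots> = (\<Sum>t\<le>k. \<Sum>m<t. coeff X t * (\<Sum>jj<k. \<beta> jj * r jj ^ N * r jj ^ (t - Suc m)) * z ^ m)"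
    proof (intro sum.cong refl)
      fix t m
      have "of_int (a (N + (t - Suc m))) = (\<Sum>jj<k. \<beta> jj * r jj ^ N * r jj ^ (t - Suc m))"
        using N[rule_format, of "N + (t - Suc m)"] by (simp add: power_add mult_ac)
      thus "coeff X t * of_int (a (N + (t - Suc m))) * z ^ m =
            coeff X t * (\<Sum>jj<k. \<beta> jj * r jj ^ N * r jj ^ (t - Suc m)) * z ^ m" by simp
    qed
    also have "\<dots> = (\<Sum>t\<le>k. \<Sum>m<t. \<Sum>jj<k. \<beta> jj * r jj ^ N * (coeff X t * (r jj ^ (t - Suc m) * z ^ m)))"
      by (simp add: sum_distrib_left sum_distrib_right mult_ac)
    also have "\<dots> = (\<Sum>t\<le>k. \<Sum>jj<k. \<Sum>m<t. \<beta> jj * r jj ^ N * (coeff X t * (r jj ^ (t - Suc m) * z ^ m)))"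
      by (intro sum.cong refl sum.swap)
    also have "\<dots> = (\<Sum>jj<k. \<Sum>t\<le>k. \<Sum>m<t. \<beta> jj * r jj ^ N * (coeff X t * (r jj ^ (t - Suc m) * z ^ m)))"
      by (rule sum.swap)
    also have "\<dots> = (\<Sum>jj<k. \<beta> jj * r jj ^ N * DD X k z (r jj))"
      unfolding DD_def by (simp add: sum_distrib_left)
    finally show ?thesis .
  qed
  have valP: "poly (map_poly of_rat P) (r ll) = \<beta> ll * r ll ^ N * poly (pderiv X) (r ll)"
    if ll: "ll < k" for ll
  proof -
    have rootll: "poly X (r ll) = 0" using rootsX ll by auto
    have "(\<Sum>jj<k. \<beta> jj * r jj ^ N * DD X k (r ll) (r jj))
        = \<beta> ll * r ll ^ N * DD X k (r ll) (r ll) + (\<Sum>jj\<in>{..<k} - {ll}. \<beta> jj * r jj ^ N * DD X k (r ll) (r jj))"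
      using ll by (subst sum.remove[of _ ll]) auto
    also have "(\<Sum>jj\<in>{..<k} - {ll}. \<beta> jj * r jj ^ N * DD X k (r ll) (r jj)) = 0"
    proof (rule sum.neutral, rule ballI)
      fix jj assume jj: "jj \<in> {..<k} - {ll}"
      have "poly X (r jj) = 0" using rootsX jj by auto
      hence "(r ll - r jj) * DD X k (r ll) (r jj) = 0" using DD_diff[of X k] degX rootll by simp
      moreover have "r ll \<noteq> r jj" using distinct jj ll by (auto dest: inj_onD)
      ultimately show "\<beta> jj * r jj ^ N * DD X k (r ll) (r jj) = 0" by simp
    qed
    finally show ?thesis using evalP DD_same[of X k] degX by simp
  qed
  have irr: "irreducible p" using irred j_pos unfolding p_def by auto
  have pdvd: "p dvd \<chi>" unfolding \<chi>_def factor p_def using j_pos by (intro dvd_prodI) auto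
  have rootpX: "poly X z = 0" if "poly pc z = 0" for z
  proof -
    have "pc dvd X" unfolding pc_def X_def using pdvd by (rule rc.hom_dvd)
    thus ?thesis using that by (auto simp: poly_eq_0_iff_dvd intro: dvd_trans)
  qed
  have Pl: "poly (map_poly of_rat P) (r l) = 0" using valP[OF l(1)] l by simp
  show False
  proof (cases "r i = 0")
    case True
    have "poly pc (of_rat 0) = 0" using i True by simp
    hence "poly p 0 = 0" unfolding pc_def of_rat_hom.poly_map_poly by simp
    then obtain u where u: "p = [:0,1:] * u" by (auto simp: poly_eq_0_iff_dvd elim: dvdE)
    have "\<not> is_unit [:0::rat,1:]" by (auto simp: is_unit_poly_iff)
    hence "is_unit u" using irreducibleD[OF irr u] by blast
    then obtain cu where cu0: "u = [:cu:]" "cu dvd 1" unfolding is_unit_poly_iff by blast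
    hence cu: "u = [:cu:]" "cu \<noteq> 0" by auto
    have "p = [:0, cu:]" using u cu by simp
    hence "poly pc z = of_rat cu * z" for z unfolding pc_def by (simp add: of_rat_hom.map_poly_pCons_hom)
    hence "r l = 0" using l cu by simp
    hence "r l = r i" using True by simp
    hence "l = i" using distinct i l by (auto dest: inj_onD)
    thus False using i l by simp
  next
    case False
    have Pi: "poly (map_poly of_rat P) (r i) \<noteq> 0"
      using valP[OF i(1)] i False simple[OF rootpX[OF i(2)]] by simp
    define g where "g = gcd p P"
    obtain h where h: "p = g * h" unfolding g_def by (rule dvdE[OF gcd_dvd1])
    from irreducibleD[OF irr h] show False
    proof
      assume hu: "is_unit h"
      have "p dvd g" using h hu by (simp add: mult_unit_dvd_iff)
      hence "p dvd P" unfolding g_def by (rule dvd_trans) simp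
      hence "pc dvd map_poly of_rat P" unfolding pc_def by (rule rc.hom_dvd)
      thus False using Pi i(2) by (auto simp: poly_eq_0_iff_dvd intro: dvd_trans)
    next
      assume gu: "is_unit g"
      then obtain cg where cg0: "g = [:cg:]" "cg dvd 1" unfolding is_unit_poly_iff by blast
      hence cg: "g = [:cg:]" "cg \<noteq> 0" by auto
      have "fst (bezout_coefficients p P) * p + snd (bezout_coefficients p P) * P = g"
        unfolding g_def by (rule bezout_coefficients_fst_snd)
      hence "map_poly of_rat (fst (bezout_coefficients p P)) * pc
           + map_poly of_rat (snd (bezout_coefficients p P)) * map_poly of_rat P = map_poly (of_rat :: rat \<Rightarrow> complex) g"
        unfolding pc_def by (metis rc.hom_add rc.hom_mult)
      hence "poly (map_poly (of_rat :: rat \<Rightarrow> complex) g) (r l) = 0"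
        by (metis Pl l(2) poly_add poly_mult mult_zero_right add_0)
      thus False using cg by simp
    qed
  qed
qed

end
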